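(* Let $k\in\mathbb{N}$, $k>2$, and let $\mathcal{H}$ be a hedgehog with support function $h(s)=a_0+\sum_{n=1}^{\infty}(a_n\cos(ns)+b_n\sin(ns))$. Then the oriented area of the $k$th Order Midpoint Set $\Omega_{\mathcal{H},k}$ of $\mathcal{H}$ is \[ A_{\Omega_{\mathcal{H},k}}=\pi\sum_{n=1}^{\infty}n\big(a_{kn-1}^2+b_{kn-1}^2-a_{kn+1}^2-b_{kn+1}^2\big). \]
   Context: Write $u(s)=(\cos s,\sin s)$, $u'(s)=(-\sin s,\cos s)$. A hedgehog is a closed planar curve determined by a smooth $2\pi$-periodic function $h$ (its support function) via $\mathcal{H}(s)=h(s)u(s)+h'(s)u'(s)$. For $s\in\mathbb{R}$ and $j\in\mathbb{Z}$ let $\ell_j(s)=\{x:\langle x,u(s+\tfrac{2\pi j}{k})\rangle=h(s+\tfrac{2\pi j}{k})\}$. The equiangular $k$-gon circumscribed about $\mathcal{H}$ at parameter $s$ has vertices $v_j(s)=\ell_j(s)\cap\ell_{j+1}(s)$, $j=0,\dots,k-1$ (indices mod $k$), with center of mass $\frac1k\sum_j v_j(s)$. The $k$th Order Midpoint Set is the closed curve of these centers of mass, parameterized by $\Omega_{\mathcal{H},k}(s)=\frac2k\sum_{j=1}^k h(s+\tfrac{2\pi j}{k})u(s+\tfrac{2\pi j}{k})$, $s\in[0,\frac{2\pi}{k}]$. Its oriented area is $A_{\Omega_{\mathcal{H},k}}=\frac12\int_0^{2\pi/k}(x\,y'-y\,x')\,ds$ where $\Omega_{\mathcal{H},k}(s)=(x(s),y(s))$.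 *)

theory Defs
  imports "HOL-Analysis.Analysis"
begin

definition smooth_fun :: "(real \<Rightarrow> real) \<Rightarrow> bool" where
  "smooth_fun h \<longleftrightarrow> (\<exists>D :: nat \<Rightarrow> real \<Rightarrow> real. D 0 = h \<and>
      (\<forall>m x. (D m has_real_derivative D (Suc m) x) (at x)))"

definition periodic_2pi :: "(real \<Rightarrow> real) \<Rightarrow> bool" where
  "periodic_2pi h \<longleftrightarrow> (\<forall>s. h (s + 2 * pi) = h s)"

definition fourier_a :: "(real \<Rightarrow> real) \<Rightarrow> nat \<Rightarrow> real" where
  "fourier_a h n = (if n = 0 then (1 / (2 * pi)) * integral {0..2*pi} h
                    else (1 / pi) * integral {0..2*pi} (\<lambda>s. h s * cos (real n * s)))"

definition fourier_b :: "(real \<Rightarrow> real) \<Rightarrow> nat \<Rightarrow> real" where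
  "fourier_b h n = (if n = 0 then 0
                    else (1 / pi) * integral {0..2*pi} (\<lambda>s. h s * sin (real n * s)))"

definition omega_x :: "(real \<Rightarrow> real) \<Rightarrow> nat \<Rightarrow> real \<Rightarrow> real" where
  "omega_x h k s = (2 / real k) * (\<Sum>j=1..k. h (s + 2*pi*real j / real k) * cos (s + 2*pi*real j / real k))"

definition omega_y :: "(real \<Rightarrow> real) \<Rightarrow> nat \<Rightarrow> real \<Rightarrow> real" where
  "omega_y h k s = (2 / real k) * (\<Sum>j=1..k. h (s + 2*pi*real j / real k) * sin (s + 2*pi*real j / real k))"

definition midpoint_set_area :: "(real \<Rightarrow> real) \<Rightarrow> nat \<Rightarrow> real" where
  "midpoint_set_area h k = (1/2) * integral {0..2*pi / real k}
     (\<lambda>s. omega_x h k s * deriv (omega_y h k) s - omega_y h k s * deriv (omega_x h k) s)"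

end

theory Submission
  imports Defs
begin


definition ee :: "int \<Rightarrow> real \<Rightarrow> complex" where
  "ee n t = exp (\<i> * of_int n * of_real t)"

definition cf :: "(real \<Rightarrow> complex) \<Rightarrow> int \<Rightarrow> complex" where
  "cf F n = integral {0..2*pi} (\<lambda>t. F t * ee (-n) t) / (2*pi)"

lemma ee_add: "ee n t * ee m t = ee (n+m) t"
  by (simp add: ee_def exp_add[symmetric] algebra_simps)

lemma ee_0 [simp]: "ee 0 t = 1" by (simp add: ee_def)

lemma ee0_fun [simp]: "ee 0 = (\<lambda>_. 1)" by (rule ext) simp

lemma ee_at0 [simp]: "ee n 0 = 1" by (simp add: ee_def)

lemma ee_norm [simp]: "norm (ee n t) = 1"
  unfolding ee_def by (metis mult.commute mult.left_commute norm_exp_i_times of_real_of_int_eq of_real_mult)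

lemma ee_cnj: "cnj (ee n t) = ee (-n) t"
  by (simp add: ee_def exp_cnj)

lemma ee_2pi: "ee n (t + 2*pi) = ee n t"
proof -
  have "ee n (t + 2*pi) = ee n t * exp (2 * pi * of_int n * \<i>)"
    by (simp add: ee_def exp_add[symmetric] algebra_simps)
  also have "exp (2 * pi * of_int n * \<i>) = 1"
    using exp_integer_2pi[of "of_int n"] by (simp add: mult_ac)
  finally show ?thesis by simp
qed

lemma ee_deriv: "((ee n) has_vector_derivative (\<i> * of_int n * ee n t)) (at t within S)"
proof -
  have "((\<lambda>z. exp (\<i> * of_int n * z)) has_field_derivative (\<i> * of_int n * exp (\<i> * of_int n * of_real t))) (at (of_real t))"
    by (auto intro!: derivative_eq_intros)
  from has_vector_derivative_real_field[OF this] show ?thesis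
    unfolding ee_def by (auto intro: has_vector_derivative_at_within)
qed

lemma continuous_ee [continuous_intros]: "continuous_on S (ee n)"
  unfolding ee_def by (intro continuous_intros)

lemma integral_ee: "integral {0..2*pi} (ee n) = (if n = 0 then 2*pi else 0)"
proof (cases "n = 0")
  case True then show ?thesis by (simp add: scaleR_conv_of_real)
next
  case False
  have "((\<lambda>t. \<i> * of_int n * ee n t) has_integral (ee n (2*pi) - ee n 0)) {0..2*pi}"
    by (intro fundamental_theorem_of_calculus) (auto intro: ee_deriv)
  then have "((\<lambda>t. \<i> * of_int n * ee n t) has_integral 0) {0..2*pi}"
    using ee_2pi[of n 0] by simp
  then have "((\<lambda>t. ee n t) has_integral 0) {0..2*pi}"
    using has_integral_mult_right[of "\<lambda>t. \<i> * of_int n * ee n t" 0 "{0..2*pi}" "1/(\<i> * of_int n)"] False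
    by (simp add: field_simps)
  with False show ?thesis by (simp add: integral_unique)
qed

lemma orth: "integral {0..2*pi} (\<lambda>t. ee m t * ee (-n) t) = (if m = n then 2*pi else 0)"
  using integral_ee[of "m - n"] by (simp add: ee_add)



lemma ee_shift: "ee n (s + t) = ee n s * ee n t"
  by (simp add: ee_def exp_add[symmetric] algebra_simps)

lemma cont_of_deriv:
  assumes "\<And>t. (F has_vector_derivative F' t) (at t)"
  shows "continuous_on S F"
  by (meson assms continuous_at_imp_continuous_on has_vector_derivative_continuous)

lemma cf_deriv:
  assumes d: "\<And>t. (F has_vector_derivative F' t) (at t)"
    and c: "continuous_on {0..2*pi} F'" and p: "F (2*pi) = F 0"
  shows "cf F' n = \<i> * of_int n * cf F n"
proof -
  have cF: "continuous_on {0..2*pi} F" by (rule cont_of_deriv[OF d])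
  have dd: "\<And>x. ((\<lambda>a. F a * ee (-n) a) has_vector_derivative (F x * (\<i> * of_int (-n) * ee (-n) x) + F' x * ee (-n) x)) (at x within {0..2*pi})"
    by (rule has_vector_derivative_mult[OF has_vector_derivative_at_within[OF d] ee_deriv])
  have "((\<lambda>t. F t * (\<i> * of_int (-n) * ee (-n) t) + F' t * ee (-n) t) has_integral
          (F (2*pi) * ee (-n) (2*pi) - F 0 * ee (-n) 0)) {0..2*pi}"
    apply (rule fundamental_theorem_of_calculus)
     apply simp
    by (rule dd)
  also have "F (2*pi) * ee (-n) (2*pi) - F 0 * ee (-n) 0 = 0"
    using p ee_2pi[of "-n" 0] by simp
  finally have h: "((\<lambda>t. F t * (\<i> * of_int (-n) * ee (-n) t) + F' t * ee (-n) t) has_integral 0) {0..2*pi}" .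
  have i1: "(\<lambda>t. F' t * ee (-n) t) integrable_on {0..2*pi}"
    by (intro integrable_continuous_interval continuous_intros c)
  have i2: "(\<lambda>t. F t * ee (-n) t) integrable_on {0..2*pi}"
    by (intro integrable_continuous_interval continuous_intros cF)
  have "integral {0..2*pi} (\<lambda>t. F t * (\<i> * of_int (-n) * ee (-n) t) + F' t * ee (-n) t) = 0"
    using h by (simp add: integral_unique)
  moreover have "integral {0..2*pi} (\<lambda>t. F t * (\<i> * of_int (-n) * ee (-n) t) + F' t * ee (-n) t)
      = - (\<i> * of_int n) * integral {0..2*pi} (\<lambda>t. F t * ee (-n) t) + integral {0..2*pi} (\<lambda>t. F' t * ee (-n) t)"
  proof -
    have "integral {0..2*pi} (\<lambda>t. F t * (\<i> * of_int (-n) * ee (-n) t) + F' t * ee (-n) t)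
       = integral {0..2*pi} (\<lambda>t. (- (\<i> * of_int n)) * (F t * ee (-n) t)) + integral {0..2*pi} (\<lambda>t. F' t * ee (-n) t)"
    proof -
      have i3: "(\<lambda>t. (- (\<i> * of_int n)) * (F t * ee (-n) t)) integrable_on {0..2*pi}"
        using integrable_on_mult_right[OF i2] .
      have eqf: "(\<lambda>t. F t * (\<i> * of_int (-n) * ee (-n) t) + F' t * ee (-n) t) = (\<lambda>t. (- (\<i> * of_int n)) * (F t * ee (-n) t) + F' t * ee (-n) t)"
        by (auto simp: algebra_simps)
      show ?thesis unfolding eqf by (rule integral_add[OF i3 i1])
    qed
    also have "\<dots> = - (\<i> * of_int n) * integral {0..2*pi} (\<lambda>t. F t * ee (-n) t) + integral {0..2*pi} (\<lambda>t. F' t * ee (-n) t)"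
      by (simp add: integral_mult_right)
    finally show ?thesis .
  qed
  ultimately have "integral {0..2*pi} (\<lambda>t. F' t * ee (-n) t) = (\<i> * of_int n) * integral {0..2*pi} (\<lambda>t. F t * ee (-n) t)"
    by (simp add: algebra_simps)
  then show ?thesis unfolding cf_def by simp
qed

lemma periodic_nat:
  fixes F :: "real \<Rightarrow> 'a"
  assumes "\<And>t. F (t + T) = F t"
  shows "F (t + real m * T) = F t"
proof (induction m)
  case (Suc m)
  have "F (t + real (Suc m) * T) = F ((t + real m * T) + T)" by (simp add: algebra_simps)
  then show ?case using assms Suc by simp
qed simp

lemma periodic_int:
  fixes F :: "real \<Rightarrow> 'a"
  assumes "\<And>t. F (t + T) = F t"
  shows "F (t + of_int m * T) = F t"
proof (cases "m \<ge> 0")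
  case True
  then obtain k where "m = int k" by (metis nonneg_eq_int)
  then show ?thesis using periodic_nat[of F T t k, OF assms] by simp
next
  case False
  obtain k where k: "m = - int k" using False by (intro that[of "nat (-m)"]) simp
  have "F ((t + of_int m * T) + real k * T) = F (t + of_int m * T)"
    by (rule periodic_nat[of F T, OF assms])
  then show ?thesis using k by simp
qed

lemma integral_periodic_shift:
  fixes Q :: "real \<Rightarrow> 'a::banach"
  assumes T: "T > 0" and p: "\<And>t. Q (t + T) = Q t" and c: "continuous_on UNIV Q"
  shows "integral {0..T} (\<lambda>s. Q (s + \<theta>)) = integral {0..T} Q"
proof -
  define m where "m = floor (\<theta> / T)"
  define \<theta>0 where "\<theta>0 = \<theta> - of_int m * T"
  have m1: "of_int m \<le> \<theta> / T" and m2: "\<theta> / T < of_int m + 1"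
    unfolding m_def by linarith+
  have t0: "0 \<le> \<theta>0" using m1 T unfolding \<theta>0_def by (simp add: field_simps)
  have t1: "\<theta>0 \<le> T" using m2 T unfolding \<theta>0_def by (simp add: field_simps)
  have ci: "\<And>a b. Q integrable_on {a..b}"
    by (intro integrable_continuous_interval continuous_on_subset[OF c]) auto
  have "(\<lambda>s. Q (s + \<theta>)) = (\<lambda>s. Q (s + \<theta>0))"
  proof
    fix s
    have "Q (s + \<theta>) = Q ((s + \<theta>0) + of_int m * T)" unfolding \<theta>0_def by simp
    then show "Q (s + \<theta>) = Q (s + \<theta>0)" using periodic_int[of Q T, OF p] by simp
  qed
  then have "integral {0..T} (\<lambda>s. Q (s + \<theta>)) = integral {0..T} (\<lambda>s. Q (s + \<theta>0))" by simp
  also have "\<dots> = integral {\<theta>0..\<theta>0+T} Q"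
    using integral_shift_real_ivl[where c="\<theta>0" and a=\<theta>0 and b="\<theta>0+T" and f=Q] by simp
  also have "\<dots> = integral {\<theta>0..T} Q + integral {T..\<theta>0+T} Q"
    using Henstock_Kurzweil_Integration.integral_combine[where a=\<theta>0 and c=T and b="\<theta>0+T" and f=Q] t0 t1 ci by simp
  also have "integral {T..\<theta>0+T} Q = integral {0..\<theta>0} (\<lambda>x. Q (x + T))"
    using integral_shift_real_ivl[where c=T and a=T and b="\<theta>0+T" and f=Q] by simp
  also have "\<dots> = integral {0..\<theta>0} Q" using p by simp
  also have "integral {\<theta>0..T} Q + integral {0..\<theta>0} Q = integral {0..T} Q"
    using Henstock_Kurzweil_Integration.integral_combine[where a=0 and c=\<theta>0 and b=T and f=Q] t0 t1 ci by (simp add: add.commute)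
  finally show ?thesis .
qed

lemma cf_shift:
  assumes c: "continuous_on UNIV P" and p: "\<And>t. P (t + 2*pi) = P t"
  shows "cf (\<lambda>s. P (s + \<theta>)) n = ee n \<theta> * cf P n"
proof -
  define Q where "Q = (\<lambda>s. P s * ee (-n) s)"
  have "(\<lambda>s. P (s + \<theta>) * ee (-n) s) = (\<lambda>s. ee n \<theta> * Q (s + \<theta>))"
  proof
    fix s
    have "ee n \<theta> * ee (-n) (s + \<theta>) = ee (-n) s"
      by (simp add: ee_shift ee_add mult.commute mult.left_commute)
    then show "P (s + \<theta>) * ee (-n) s = ee n \<theta> * Q (s + \<theta>)"
      unfolding Q_def by (metis mult.left_commute)
  qed
  then have "integral {0..2*pi} (\<lambda>s. P (s + \<theta>) * ee (-n) s) = ee n \<theta> * integral {0..2*pi} (\<lambda>s. Q (s + \<theta>))"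
    by (simp add: integral_mult_right)
  also have "integral {0..2*pi} (\<lambda>s. Q (s + \<theta>)) = integral {0..2*pi} Q"
    by (rule integral_periodic_shift) (auto simp: Q_def p ee_2pi intro!: continuous_intros c)
  finally show ?thesis unfolding cf_def Q_def by simp
qed



lemma ee_cis: "ee n t = cis (of_int n * t)"
  by (simp add: ee_def cis_conv_exp mult.assoc)

inductive_set tp :: "(real \<Rightarrow> complex) set" where
  tp_ee: "ee n \<in> tp"
| tp_scale: "\<phi> \<in> tp \<Longrightarrow> (\<lambda>t. c * \<phi> t) \<in> tp"
| tp_add: "\<phi> \<in> tp \<Longrightarrow> \<psi> \<in> tp \<Longrightarrow> (\<lambda>t. \<phi> t + \<psi> t) \<in> tp"

lemma tp_const: "(\<lambda>t. c) \<in> tp"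
  using tp_scale[OF tp_ee[of 0], of c] by simp

lemma tp_mult_ee: "\<psi> \<in> tp \<Longrightarrow> (\<lambda>t. ee n t * \<psi> t) \<in> tp"
proof (induction rule: tp.induct)
  case (tp_ee m)
  then show ?case using tp.tp_ee[of "n+m"] by (simp add: ee_add)
next
  case (tp_scale \<phi> c)
  then show ?case using tp.tp_scale[OF tp_scale.IH, of c] by (simp add: mult.left_commute)
next
  case (tp_add \<phi> \<psi>)
  then show ?case using tp.tp_add[OF tp_add.IH] by (simp add: distrib_left)
qed

lemma tp_mult: "\<phi> \<in> tp \<Longrightarrow> \<psi> \<in> tp \<Longrightarrow> (\<lambda>t. \<phi> t * \<psi> t) \<in> tp"
proof (induction rule: tp.induct)
  case (tp_ee m)
  then show ?case by (rule tp_mult_ee)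
next
  case (tp_scale \<phi> c)
  then show ?case using tp.tp_scale[OF tp_scale.IH, of c] by (simp add: mult.assoc)
next
  case (tp_add \<phi>1 \<phi>2)
  then show ?case using tp.tp_add[OF tp_add.IH] by (simp add: distrib_right)
qed

lemma tp_real_poly:
  fixes p :: "complex \<Rightarrow> real"
  assumes "real_polynomial_function p"
  shows "(\<lambda>t. complex_of_real (p (ee 1 t))) \<in> tp"
  using assms
proof (induction rule: real_polynomial_function.induct)
  case (linear p)
  have lin: "p w = Re w * p 1 + Im w * p \<i>" for w
  proof -
    have "w = Re w *\<^sub>R 1 + Im w *\<^sub>R \<i>" by (simp add: complex_eq_iff)
    then have "p w = p (Re w *\<^sub>R 1 + Im w *\<^sub>R \<i>)" by (rule arg_cong)
    also have "\<dots> = Re w * p 1 + Im w * p \<i>"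
      using bounded_linear.linear[OF linear] by (simp add: linear_add linear_scale)
    finally show ?thesis .
  qed
  define \<alpha> where "\<alpha> = (complex_of_real (p 1) - \<i> * complex_of_real (p \<i>)) / 2"
  define \<beta> where "\<beta> = (complex_of_real (p 1) + \<i> * complex_of_real (p \<i>)) / 2"
  have "(\<lambda>t. complex_of_real (p (ee 1 t))) = (\<lambda>t. \<alpha> * ee 1 t + \<beta> * ee (-1) t)"
  proof
    fix t
    show "complex_of_real (p (ee 1 t)) = \<alpha> * ee 1 t + \<beta> * ee (-1) t"
    proof -
      have "p (ee 1 t) = cos t * p 1 + sin t * p \<i>"
        using lin[of "ee 1 t"] by (simp add: ee_cis)
      then show ?thesis unfolding \<alpha>_def \<beta>_def ee_cis
        by (simp add: complex_eq_iff algebra_simps add_divide_distrib[symmetric])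
    qed
  qed
  then show ?case using tp_add[OF tp_scale[OF tp_ee[of 1]] tp_scale[OF tp_ee[of "-1"]], of \<alpha> \<beta>] by simp
next
  case (const c)
  then show ?case by (rule tp_const)
next
  case (add f g)
  then show ?case using tp_add[OF add.IH] by simp
next
  case (mult f g)
  then show ?case using tp_mult[OF mult.IH] by simp
qed

lemma tp_poly:
  fixes g :: "complex \<Rightarrow> complex"
  assumes "polynomial_function g"
  shows "(\<lambda>t. g (ee 1 t)) \<in> tp"
proof -
  have r: "real_polynomial_function (Re \<circ> g)" and i: "real_polynomial_function (Im \<circ> g)"
    using assms unfolding polynomial_function_def by (auto simp: bounded_linear_Re bounded_linear_Im)
  have "(\<lambda>t. g (ee 1 t)) = (\<lambda>t. complex_of_real ((Re \<circ> g) (ee 1 t)) + \<i> * complex_of_real ((Im \<circ> g) (ee 1 t)))"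
    by (auto simp: complex_eq_iff)
  then show ?thesis
    using tp_add[OF tp_real_poly[OF r] tp_scale[OF tp_real_poly[OF i]]] by simp
qed

lemma tp_props:
  assumes cF: "continuous_on UNIV F" and z: "\<And>n. cf F n = 0" and "\<phi> \<in> tp"
  shows "continuous_on UNIV \<phi> \<and> integral {0..2*pi} (\<lambda>t. cnj (F t) * \<phi> t) = 0"
  using assms(3)
proof (induction rule: tp.induct)
  case (tp_ee n)
  have "integral {0..2*pi} (\<lambda>t. cnj (F t) * ee n t) = cnj (integral {0..2*pi} (\<lambda>t. F t * ee (-n) t))"
    by (simp add: integral_cnj ee_cnj)
  also have "integral {0..2*pi} (\<lambda>t. F t * ee (-n) t) = 0"
    using z[of n] unfolding cf_def by simp
  finally show ?case by (simp add: continuous_ee)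
next
  case (tp_scale \<phi> c)
  then show ?case
    by (auto intro!: continuous_intros simp: mult.left_commute[of "cnj (F _)"] integral_mult_right)
next
  case (tp_add \<phi> \<psi>)
  have i1: "(\<lambda>t. cnj (F t) * \<phi> t) integrable_on {0..2*pi}"
    using tp_add.IH continuous_on_subset[OF cF subset_UNIV] continuous_on_subset[OF _ subset_UNIV]
    by (intro integrable_continuous_interval continuous_intros) blast+
  have i2: "(\<lambda>t. cnj (F t) * \<psi> t) integrable_on {0..2*pi}"
    using tp_add.IH continuous_on_subset[OF cF subset_UNIV] continuous_on_subset[OF _ subset_UNIV]
    by (intro integrable_continuous_interval continuous_intros) blast+
  show ?case using tp_add.IH integral_add[OF i1 i2]
    by (auto intro!: continuous_intros simp: distrib_left)
qed

lemma periodic_exp_eq: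
  fixes F :: "real \<Rightarrow> 'a"
  assumes p: "\<And>t. F (t + 2*pi) = F t"
    and e: "exp (\<i> * complex_of_real a) = exp (\<i> * complex_of_real b)"
  shows "F a = F b"
proof -
  obtain n :: int where "\<i> * complex_of_real a = \<i> * complex_of_real b + (of_int (2 * n) * pi) * \<i>"
    using e exp_eq by blast
  then have "a = b + of_int n * (2*pi)"
    by (auto simp: complex_eq_iff)
  then show ?thesis using periodic_int[of F "2*pi", OF p] by simp
qed

lemma circle_fun:
  fixes F :: "real \<Rightarrow> complex"
  assumes cF: "continuous_on UNIV F" and p: "\<And>t. F (t + 2*pi) = F t"
  shows "continuous_on (sphere 0 1) (\<lambda>w. F (Arg w))" and "\<And>t. F (Arg (ee 1 t)) = F t"
proof -
  have eq: "F (Arg w) = F (Arg2pi w)" if "w \<in> sphere 0 1" for w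
  proof (rule periodic_exp_eq[where F=F, OF p])
    have w0: "w \<noteq> 0" "norm w = 1" using that by auto
    have "w = exp (\<i> * Arg w)" using Arg_eq[OF w0(1)] w0(2) by simp
    moreover have "w = exp (\<i> * Arg2pi w)" using Arg2pi[of w] w0(2) unfolding is_Arg_def by simp
    ultimately show "exp (\<i> * complex_of_real (Arg w)) = exp (\<i> * complex_of_real (Arg2pi w))" by simp
  qed
  have iF: "isCont F x" for x using cF by (simp add: continuous_on_eq_continuous_at)
  show "continuous_on (sphere 0 1) (\<lambda>w. F (Arg w))"
    unfolding continuous_on_eq_continuous_within
  proof
    fix w :: complex assume w: "w \<in> sphere 0 1"
    show "continuous (at w within sphere 0 1) (\<lambda>w. F (Arg w))"
    proof (cases "w \<in> \<real>\<^sub>\<le>\<^sub>0")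
      case False
      then have "isCont (\<lambda>w. F (Arg w)) w"
        by (intro continuous_at_compose[OF continuous_at_Arg[OF False], unfolded o_def] iF)
      then show ?thesis by (rule continuous_at_imp_continuous_within)
    next
      case True
      then have "w = -1" using w
        using cmod_eq_Re[of w] by (auto simp: complex_nonpos_Reals_iff complex_eq_iff)
      then have "w \<notin> \<real>\<^sub>\<ge>\<^sub>0" by (auto simp: complex_nonneg_Reals_iff)
      then have "isCont (\<lambda>w. F (Arg2pi w)) w"
        by (intro continuous_at_compose[OF continuous_at_Arg2pi, unfolded o_def] iF)
      then have "continuous (at w within sphere 0 1) (\<lambda>w. F (Arg2pi w))"
        by (rule continuous_at_imp_continuous_within)
      then show ?thesis
        by (rule continuous_transform_within[where \<delta>=1]) (use w eq in auto)
    qed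
  qed
  show "F (Arg (ee 1 t)) = F t" for t
  proof (rule periodic_exp_eq[where F=F, OF p])
    have n: "norm (ee 1 t) = 1" by simp
    then have "ee 1 t \<noteq> 0" by (metis norm_zero zero_neq_one)
    from Arg_eq[OF this] n show "exp (\<i> * complex_of_real (Arg (ee 1 t))) = exp (\<i> * complex_of_real t)"
      by (simp add: ee_def)
  qed
qed



lemma cf_zero_imp_zero:
  fixes F :: "real \<Rightarrow> complex"
  assumes cF: "continuous_on UNIV F" and p: "\<And>t. F (t + 2*pi) = F t" and z: "\<And>n. cf F n = 0"
    and t: "t \<in> {0..2*pi}"
  shows "F t = 0"
proof -
  define I where "I = integral {0..2*pi} (\<lambda>t. (norm (F t))^2)"
  have cF': "continuous_on {0..2*pi} F" using continuous_on_subset[OF cF] by blast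
  have "bounded (F ` {0..2*pi})" by (intro compact_imp_bounded compact_continuous_image cF') auto
  then obtain B where B: "B > 0" "\<And>x. x \<in> F ` {0..2*pi} \<Longrightarrow> norm x \<le> B" by (auto simp: bounded_pos)
  have cN: "continuous_on {0..2*pi} (\<lambda>t. (norm (F t))^2)" by (intro continuous_intros cF')
  have hI: "((\<lambda>t. (norm (F t))^2) has_integral I) {0..2*pi}"
    unfolding I_def by (intro integrable_integral integrable_continuous_interval cN)
  have hIc: "((\<lambda>t. cnj (F t) * F t) has_integral of_real I) {0..2*pi}"
  proof -
    have "((\<lambda>t. complex_of_real ((norm (F t))^2)) has_integral of_real I) {0..2*pi}"
      by (rule has_integral_of_real[OF hI])
    moreover have "(\<lambda>t. complex_of_real ((norm (F t))^2)) = (\<lambda>t. cnj (F t) * F t)"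
      using complex_norm_square by (auto simp: mult.commute simp del: of_real_power)
    ultimately show ?thesis by simp
  qed
  have key: "norm I \<le> 2*pi*B*e" if e: "e > 0" for e
  proof -
    obtain g where g: "polynomial_function g" "\<forall>w\<in>sphere 0 1. norm ((\<lambda>w. F (Arg w)) w - g w) < e"
      using Stone_Weierstrass_polynomial_function[OF compact_sphere circle_fun(1)[OF cF p] e] by blast
    define \<phi> where "\<phi> = (\<lambda>t. g (ee 1 t))"
    have \<phi>tp: "\<phi> \<in> tp" using tp_poly[OF g(1)] \<phi>_def by simp
    from tp_props[OF cF z \<phi>tp] have c\<phi>: "continuous_on UNIV \<phi>"
      and z0: "integral {0..2*pi} (\<lambda>t. cnj (F t) * \<phi> t) = 0" by auto
    have close: "norm (F t - \<phi> t) < e" for t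
      using g(2)[rule_format, of "ee 1 t"] circle_fun(2)[OF cF p, of t] unfolding \<phi>_def by simp
    have c\<phi>': "continuous_on {0..2*pi} \<phi>" using continuous_on_subset[OF c\<phi>] by blast
    have i1: "(\<lambda>t. cnj (F t) * (F t - \<phi> t)) integrable_on {0..2*pi}"
      by (intro integrable_continuous_interval continuous_intros cF' c\<phi>')
    have i2: "(\<lambda>t. cnj (F t) * \<phi> t) integrable_on {0..2*pi}"
      by (intro integrable_continuous_interval continuous_intros cF' c\<phi>')
    have "((\<lambda>t. cnj (F t) * (F t - \<phi> t) + cnj (F t) * \<phi> t) has_integral
           (integral {0..2*pi} (\<lambda>t. cnj (F t) * (F t - \<phi> t)) + 0)) {0..2*pi}"
      using has_integral_add[OF integrable_integral[OF i1] integrable_integral[OF i2]] z0 by simp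
    moreover have "(\<lambda>t. cnj (F t) * (F t - \<phi> t) + cnj (F t) * \<phi> t) = (\<lambda>t. cnj (F t) * F t)"
      by (auto simp: algebra_simps)
    ultimately have H: "((\<lambda>t. cnj (F t) * F t) has_integral (integral {0..2*pi} (\<lambda>t. cnj (F t) * (F t - \<phi> t)))) {0..2*pi}"
      by simp
    have EQ: "of_real I = integral {0..2*pi} (\<lambda>t. cnj (F t) * (F t - \<phi> t))"
      by (rule has_integral_unique[OF hIc H])
    have BND: "norm (integral {0..2*pi} (\<lambda>t. cnj (F t) * (F t - \<phi> t))) \<le> (B*e) * (2*pi)"
    proof -
      have Be: "0 \<le> B * e" using B e by simp
      have hi: "((\<lambda>t. cnj (F t) * (F t - \<phi> t)) has_integral integral {0..2*pi} (\<lambda>t. cnj (F t) * (F t - \<phi> t))) (cbox 0 (2*pi))"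
        using integrable_integral[OF i1] by simp
      have bnd: "norm (cnj (F x) * (F x - \<phi> x)) \<le> B * e" if "x \<in> cbox 0 (2*pi)" for x
      proof -
        have "norm (F x) \<le> B" using B(2) that by auto
        moreover have "norm (F x - \<phi> x) \<le> e" using close[of x] by simp
        ultimately show ?thesis by (simp add: norm_mult mult_mono' mult_mono)
      qed
      from has_integral_bound[OF Be hi bnd] show ?thesis by simp
    qed
    have "norm (complex_of_real I) \<le> (B*e) * (2*pi)" using BND unfolding EQ[symmetric] .
    then show ?thesis by (simp add: algebra_simps)
  qed
  have I0: "I = 0"
  proof (rule ccontr)
    assume "I \<noteq> 0"
    then have pos: "norm I > 0" by simp
    have "norm I \<le> 2*pi*B*(norm I / (4*pi*B))"
      using key[of "norm I / (4*pi*B)"] pos B by simp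
    also have "\<dots> = norm I / 2" using B by (simp add: field_simps)
    finally show False using pos by simp
  qed
  have "(norm (F t))^2 = 0"
    using has_integral_0_cbox_imp_0[of 0 "2*pi" "\<lambda>t. (norm (F t))^2" t] cN hI I0 t pi_gt_zero by simp
  then show ?thesis by simp
qed



lemma ul_integral_has_sum:
  fixes f :: "'i \<Rightarrow> real \<Rightarrow> complex"
  assumes u: "uniform_limit {a..b} (\<lambda>X t. \<Sum>n\<in>X. f n t) g (finite_subsets_at_top UNIV)"
    and c: "\<And>n. continuous_on {a..b} (f n)"
  shows "((\<lambda>n. integral {a..b} (f n)) has_sum integral {a..b} g) UNIV"
proof -
  have cs: "continuous_on {a..b} (\<lambda>t. \<Sum>n\<in>X. f n t)" for X
    by (intro continuous_on_sum c)
  obtain I J where I: "\<And>X. ((\<lambda>t. \<Sum>n\<in>X. f n t) has_integral I X) {a..b}"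
    and J: "(g has_integral J) {a..b}" and lim: "(I \<longlongrightarrow> J) (finite_subsets_at_top UNIV)"
    using uniform_limit_integral[OF u cs] by auto
  have ev: "eventually (\<lambda>X. I X = (\<Sum>n\<in>X. integral {a..b} (f n))) (finite_subsets_at_top UNIV)"
    unfolding eventually_finite_subsets_at_top
  proof (intro exI[of _ "{}"] conjI allI impI)
    fix Y :: "'i set" assume Y: "finite Y \<and> {} \<subseteq> Y \<and> Y \<subseteq> UNIV"
    have "((\<lambda>t. \<Sum>n\<in>Y. f n t) has_integral (\<Sum>n\<in>Y. integral {a..b} (f n))) {a..b}"
      using Y by (intro has_integral_sum integrable_integral integrable_continuous_interval c) auto
    then show "I Y = (\<Sum>n\<in>Y. integral {a..b} (f n))" using I[of Y] has_integral_unique by blast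
  qed auto
  have "((\<lambda>X. \<Sum>n\<in>X. integral {a..b} (f n)) \<longlongrightarrow> J) (finite_subsets_at_top UNIV)"
    using tendsto_cong[OF ev] lim by simp
  then show ?thesis unfolding has_sum_def using J integral_unique by metis
qed

lemma cf_diff:
  assumes "continuous_on {0..2*pi} F" "continuous_on {0..2*pi} G"
  shows "cf (\<lambda>t. F t - G t) n = cf F n - cf G n"
proof -
  have "integral {0..2*pi} (\<lambda>t. (F t - G t) * ee (-n) t) = integral {0..2*pi} (\<lambda>t. F t * ee (-n) t) - integral {0..2*pi} (\<lambda>t. G t * ee (-n) t)"
    unfolding left_diff_distrib
    by (intro integral_diff integrable_continuous_interval continuous_intros assms)
  then show ?thesis unfolding cf_def by (simp add: diff_divide_distrib)
qed

lemma parseval: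
  fixes F G :: "real \<Rightarrow> complex"
  assumes cF: "continuous_on UNIV F" and p: "\<And>t. F (t + 2*pi) = F t"
    and sF: "(\<lambda>n. norm (cf F n)) summable_on UNIV"
    and cG: "continuous_on {0..2*pi} G"
  shows "((\<lambda>n. cnj (cf F n) * cf G n) has_sum (integral {0..2*pi} (\<lambda>t. cnj (F t) * G t) / (2*pi))) UNIV"
proof -
  define c where "c = cf F"
  define S where "S = (\<lambda>t. \<Sum>\<^sub>\<infinity>n. c n * ee n t)"
  have sc: "(\<lambda>n. norm (c n)) summable_on UNIV" using sF c_def by simp
  have hs: "((\<lambda>n. c n * ee n t) has_sum S t) UNIV" for t
  proof -
    have "(\<lambda>n. norm (c n * ee n t)) summable_on UNIV" using sc by (simp add: norm_mult)
    then show ?thesis unfolding S_def by (rule has_sum_infsum[OF abs_summable_summable])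
  qed
  have UL: "uniform_limit UNIV (\<lambda>X t. \<Sum>n\<in>X. c n * ee n t) S (finite_subsets_at_top UNIV)"
    by (rule Weierstrass_m_test_general'[OF _ hs sc]) (simp add: norm_mult)
  have cS: "continuous_on UNIV S"
    apply (rule uniform_limit_theorem[OF _ UL])
     apply (rule always_eventually)
     apply (intro allI continuous_intros)
    apply simp
    done
  have pS: "S (t + 2*pi) = S t" for t unfolding S_def by (simp add: ee_2pi)
  have cfS: "cf S m = c m" for m
  proof -
    have hs2: "((\<lambda>n. c n * ee n t * ee (-m) t) has_sum S t * ee (-m) t) UNIV" for t
      by (rule has_sum_cmult_left[OF hs])
    have UL2: "uniform_limit {0..2*pi} (\<lambda>X t. \<Sum>n\<in>X. c n * ee n t * ee (-m) t) (\<lambda>t. S t * ee (-m) t) (finite_subsets_at_top UNIV)"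
      by (rule Weierstrass_m_test_general'[OF _ hs2 sc]) (simp add: norm_mult)
    have A: "((\<lambda>n. integral {0..2*pi} (\<lambda>t. c n * ee n t * ee (-m) t)) has_sum integral {0..2*pi} (\<lambda>t. S t * ee (-m) t)) UNIV"
      by (rule ul_integral_has_sum[OF UL2]) (intro continuous_intros)
    have E: "(\<lambda>n. integral {0..2*pi} (\<lambda>t. c n * ee n t * ee (-m) t)) = (\<lambda>n. if n = m then c m * (2*pi) else 0)"
    proof
      fix n
      have "integral {0..2*pi} (\<lambda>t. c n * ee n t * ee (-m) t) = c n * integral {0..2*pi} (\<lambda>t. ee n t * ee (-m) t)"
        unfolding mult.assoc by (rule integral_mult_right)
      then show "integral {0..2*pi} (\<lambda>t. c n * ee n t * ee (-m) t) = (if n = m then c m * (2*pi) else 0)"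
        by (simp add: orth)
    qed
    have H: "((\<lambda>n. if n = m then c m * (2*pi) else 0) has_sum (c m * (2*pi))) UNIV"
      by (rule has_sum_finite_neutralI[of "{m}"]) auto
    have "integral {0..2*pi} (\<lambda>t. S t * ee (-m) t) = c m * (2*pi)"
      using has_sum_unique[OF A[unfolded E] H] .
    then show ?thesis unfolding cf_def by simp
  qed
  have FS: "F t = S t" if t: "t \<in> {0..2*pi}" for t
  proof -
    have "(\<lambda>t. F t - S t) t = 0"
    proof (rule cf_zero_imp_zero[OF _ _ _ t])
      show "continuous_on UNIV (\<lambda>t. F t - S t)" by (intro continuous_intros cF cS)
      show "F (t + 2*pi) - S (t + 2*pi) = F t - S t" for t using p pS by simp
      show "cf (\<lambda>t. F t - S t) n = 0" for n
        using cf_diff[of F S n] cfS[of n] continuous_on_subset[OF cF] continuous_on_subset[OF cS] c_def by auto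
    qed
    then show ?thesis by simp
  qed
  have "compact (G ` {0..2*pi})" by (intro compact_continuous_image cG) auto
  then have "bounded (G ` {0..2*pi})" by (rule compact_imp_bounded)
  then obtain BG where BG: "BG > 0" "\<And>x. x \<in> G ` {0..2*pi} \<Longrightarrow> norm x \<le> BG"
    unfolding bounded_pos by blast
  have hs3: "((\<lambda>n. cnj (c n) * ee (-n) t * G t) has_sum cnj (S t) * G t) UNIV" for t
  proof -
    have "((\<lambda>n. cnj (c n * ee n t)) has_sum cnj (S t)) UNIV" using hs[of t] by (simp only: has_sum_cnj_iff)
    then have "((\<lambda>n. cnj (c n) * ee (-n) t) has_sum cnj (S t)) UNIV" by (simp add: ee_cnj)
    then show ?thesis by (rule has_sum_cmult_left)
  qed
  have sc3: "(\<lambda>n. norm (c n) * BG) summable_on UNIV" by (rule summable_on_cmult_left[OF sc])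
  have UL3: "uniform_limit {0..2*pi} (\<lambda>X t. \<Sum>n\<in>X. cnj (c n) * ee (-n) t * G t) (\<lambda>t. cnj (S t) * G t) (finite_subsets_at_top UNIV)"
  proof (rule Weierstrass_m_test_general'[OF _ hs3 sc3])
    fix n :: int and t :: real assume "n \<in> UNIV" "t \<in> {0..2*pi}"
    then have "norm (G t) \<le> BG" using BG by auto
    then show "norm (cnj (c n) * ee (-n) t * G t) \<le> norm (c n) * BG"
      by (simp add: norm_mult mult_left_mono)
  qed
  have B: "((\<lambda>n. integral {0..2*pi} (\<lambda>t. cnj (c n) * ee (-n) t * G t)) has_sum integral {0..2*pi} (\<lambda>t. cnj (S t) * G t)) UNIV"
    by (rule ul_integral_has_sum[OF UL3]) (intro continuous_intros cG)
  have "(\<lambda>n. integral {0..2*pi} (\<lambda>t. cnj (c n) * ee (-n) t * G t)) = (\<lambda>n. cnj (c n) * cf G n * (2*pi))"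
    by (auto simp: cf_def mult.assoc integral_mult_right mult.commute[of "ee _ _"])
  moreover have "integral {0..2*pi} (\<lambda>t. cnj (S t) * G t) = integral {0..2*pi} (\<lambda>t. cnj (F t) * G t)"
    by (rule integral_cong) (simp add: FS)
  ultimately have L: "((\<lambda>n. cnj (c n) * cf G n * (2*pi)) has_sum integral {0..2*pi} (\<lambda>t. cnj (F t) * G t)) UNIV"
    using B by simp
  have "((\<lambda>n. cnj (c n) * cf G n * (2*pi)) has_sum X) UNIV \<longleftrightarrow> ((\<lambda>n. cnj (c n) * cf G n) has_sum X/(2*pi)) UNIV" for X
    by (rule has_sum_cmult_left_iff) simp
  from this[THEN iffD1, OF L] show ?thesis unfolding c_def .
qed



lemma inv_sq_summable_int: "(\<lambda>n::int. inverse ((real_of_int n)^2)) summable_on UNIV"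
proof -
  have s1: "summable (\<lambda>m::nat. inverse ((real m)^2))"
    using inverse_power_summable[of 2, where 'a=real] by simp
  have s2: "summable (\<lambda>m::nat. inverse ((real (Suc m))^2))"
    using s1 summable_Suc_iff[of "\<lambda>m. inverse ((real m)^2)"] by simp
  have A: "(\<lambda>n::int. inverse ((real_of_int n)^2)) summable_on (int ` UNIV)"
    by (subst summable_on_reindex) (auto intro!: norm_summable_imp_summable_on simp: o_def s1)
  have B: "(\<lambda>n::int. inverse ((real_of_int n)^2)) summable_on ((\<lambda>m. - int (Suc m)) ` UNIV)"
  proof (subst summable_on_reindex)
    show "inj_on (\<lambda>m. - int (Suc m)) UNIV" by (auto simp: inj_on_def)
    have "(\<lambda>m. inverse ((real_of_int (- int (Suc m)))^2)) = (\<lambda>m. inverse ((real (Suc m))^2))"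
    proof
      fix m :: nat
      have "(real_of_int (- int (Suc m)))^2 = (real (Suc m))^2" by (simp add: power2_eq_square algebra_simps)
      then show "inverse ((real_of_int (- int (Suc m)))^2) = inverse ((real (Suc m))^2)" by simp
    qed
    then show "((\<lambda>n::int. inverse ((real_of_int n)^2)) \<circ> (\<lambda>m. - int (Suc m))) summable_on UNIV"
      using s2 by (auto intro!: norm_summable_imp_summable_on simp: o_def)
  qed
  have U: "(UNIV :: int set) = int ` UNIV \<union> (\<lambda>m. - int (Suc m)) ` UNIV"
  proof -
    have "x \<in> int ` UNIV \<union> (\<lambda>m. - int (Suc m)) ` UNIV" for x :: int
    proof (cases "x \<ge> 0")
      case True then show ?thesis by (auto intro: image_eqI[of _ _ "nat x"])
    next
      case False then show ?thesis by (auto intro!: image_eqI[of _ _ "nat (-x - 1)"])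
    qed
    then show ?thesis by auto
  qed
  show ?thesis unfolding U
    by (rule summable_on_Un_disjoint[OF A B]) auto
qed

lemma cf_bound:
  assumes c: "continuous_on {0..2*pi} F" and B: "\<And>t. t \<in> {0..2*pi} \<Longrightarrow> norm (F t) \<le> B"
  shows "norm (cf F n) \<le> B"
proof -
  have "norm (F 0) \<le> B" using B[of 0] by simp
  then have B0: "0 \<le> B" using norm_ge_zero[of "F 0"] by linarith
  have hi: "((\<lambda>t. F t * ee (-n) t) has_integral integral {0..2*pi} (\<lambda>t. F t * ee (-n) t)) (cbox 0 (2*pi))"
    using integrable_integral[OF integrable_continuous_interval[of 0 "2*pi" "\<lambda>t. F t * ee (-n) t"]] c
    by (auto intro!: continuous_intros)
  have "norm (integral {0..2*pi} (\<lambda>t. F t * ee (-n) t)) \<le> B * (2*pi)"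
    using has_integral_bound[OF B0 hi] B by (simp add: norm_mult)
  then show ?thesis unfolding cf_def by (simp add: norm_divide field_simps)
qed

lemma cf_decay:
  fixes F F1 F2 :: "real \<Rightarrow> complex"
  assumes d1: "\<And>t. (F has_vector_derivative F1 t) (at t)"
    and d2: "\<And>t. (F1 has_vector_derivative F2 t) (at t)"
    and c2: "continuous_on UNIV F2"
    and p: "\<And>t. F (t + 2*pi) = F t" and p1: "\<And>t. F1 (t + 2*pi) = F1 t"
  shows "(\<lambda>n. norm (cf F n)) summable_on UNIV"
proof -
  have c1: "continuous_on UNIV F1" by (rule cont_of_deriv[OF d2])
  have e1: "cf F1 n = \<i> * of_int n * cf F n" for n
    by (rule cf_deriv[OF d1 continuous_on_subset[OF c1]]) (use p[of 0] in auto)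
  have e2: "cf F2 n = \<i> * of_int n * cf F1 n" for n
    by (rule cf_deriv[OF d2 continuous_on_subset[OF c2]]) (use p1[of 0] in auto)
  have "compact (F2 ` {0..2*pi})" by (intro compact_continuous_image continuous_on_subset[OF c2]) auto
  then have "bounded (F2 ` {0..2*pi})" by (rule compact_imp_bounded)
  then obtain B where B: "B > 0" "\<And>x. x \<in> F2 ` {0..2*pi} \<Longrightarrow> norm x \<le> B"
    unfolding bounded_pos by blast
  have bF2: "norm (cf F2 n) \<le> B" for n
    by (rule cf_bound) (use B continuous_on_subset[OF c2] in auto)
  define M where "M n = B * inverse ((real_of_int n)^2) + (if n = 0 then norm (cf F 0) else 0)" for n :: int
  have sM: "M summable_on UNIV"
  proof -
    have "(\<lambda>n::int. B * inverse ((real_of_int n)^2)) summable_on UNIV"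
      using summable_on_cmult_right[OF inv_sq_summable_int] .
    moreover have "(\<lambda>n::int. if n = 0 then norm (cf F 0) else 0) summable_on UNIV"
      by (rule has_sum_imp_summable[OF has_sum_finite_neutralI[of "{0}"]]) auto
    ultimately show ?thesis unfolding M_def by (rule summable_on_add)
  qed
  show ?thesis
  proof (rule summable_on_comparison_test[OF sM])
    fix n :: int
    show "0 \<le> norm (cf F n)" by simp
    show "norm (cf F n) \<le> M n"
    proof (cases "n = 0")
      case True then show ?thesis by (simp add: M_def)
    next
      case False
      have "cf F2 n = - ((of_int n)^2) * cf F n" using e1 e2 by (simp add: power2_eq_square algebra_simps)
      then have "norm (cf F2 n) = (real_of_int n)^2 * norm (cf F n)" by (simp add: norm_mult norm_power)
      then have "(real_of_int n)^2 * norm (cf F n) \<le> B" using bF2[of n] by simp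
      then have "norm (cf F n) \<le> B * inverse ((real_of_int n)^2)" using False
        by (simp add: field_simps)
      then show ?thesis using False by (simp add: M_def)
    qed
  qed
qed

lemma int_has_sum_imp_sums:
  fixes r :: "int \<Rightarrow> real"
  assumes h: "(r has_sum S) UNIV"
  shows "(\<lambda>m. r (int (Suc m)) + r (- int (Suc m))) sums (S - r 0)"
proof -
  define P where "P = range (\<lambda>m. int (Suc m))"
  define N where "N = range (\<lambda>m. - int (Suc m))"
  have sP: "r summable_on P" by (rule summable_on_subset_banach[OF has_sum_imp_summable[OF h]]) auto
  have sN: "r summable_on N" by (rule summable_on_subset_banach[OF has_sum_imp_summable[OF h]]) auto
  obtain SP where hP: "(r has_sum SP) P" using sP summable_on_def by blast
  obtain SN where hN: "(r has_sum SN) N" using sN summable_on_def by blast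
  have "((r \<circ> (\<lambda>m. int (Suc m))) has_sum SP) UNIV"
    using hP unfolding P_def by (subst has_sum_reindex[symmetric]) (auto simp: inj_on_def)
  then have s1: "(\<lambda>m. r (int (Suc m))) sums SP" by (simp add: o_def has_sum_imp_sums)
  have "((r \<circ> (\<lambda>m. - int (Suc m))) has_sum SN) UNIV"
    using hN unfolding N_def by (subst has_sum_reindex[symmetric]) (auto simp: inj_on_def)
  then have s2: "(\<lambda>m. r (- int (Suc m))) sums SN" by (simp add: o_def has_sum_imp_sums)
  have "(r has_sum (SP + SN)) (P \<union> N)"
    by (rule has_sum_Un_disjoint[OF hP hN]) (auto simp: P_def N_def)
  then have "(r has_sum (SP + SN + r 0)) (P \<union> N \<union> {0})"
    by (rule has_sum_Un_disjoint) (auto simp: P_def N_def intro: has_sum_finiteI)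
  moreover have "P \<union> N \<union> {0} = UNIV"
  proof -
    have "x \<in> P \<union> N \<union> {0}" for x :: int
    proof (cases "x > 0")
      case True then show ?thesis unfolding P_def by (auto intro!: image_eqI[of _ _ "nat (x - 1)"])
    next
      case False
      show ?thesis
      proof (cases "x = 0")
        case False' : False
        with \<open>\<not> x > 0\<close> show ?thesis unfolding N_def by (auto intro!: image_eqI[of _ _ "nat (-x - 1)"])
      qed simp
    qed
    then show ?thesis by auto
  qed
  ultimately have "S = SP + SN + r 0" using h has_sum_unique by metis
  then show ?thesis using sums_add[OF s1 s2] by simp
qed

lemma roots_sum:
  assumes k: "k > 0"
  shows "(\<Sum>j=1..k. ee n (2*pi*real j / real k)) = (if int k dvd n then of_nat k else 0)"
proof -
  define \<omega> where "\<omega> = ee n (2*pi / real k)"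
  have pw: "ee n (2*pi*real j / real k) = \<omega> ^ j" for j
    unfolding \<omega>_def ee_def by (simp add: exp_of_nat_mult[symmetric] algebra_simps)
  have wk: "\<omega> ^ k = 1"
    using pw[of k] k ee_2pi[of n 0] by simp
  have "(\<Sum>j=1..k. ee n (2*pi*real j / real k)) = (\<Sum>j=1..k. \<omega> ^ j)" by (simp add: pw)
  also have "\<dots> = \<omega> * (\<Sum>i<k. \<omega> ^ i)"
  proof -
    have "(\<Sum>j=1..k. \<omega> ^ j) = (\<Sum>i<k. \<omega> ^ Suc i)"
      using k by (induction k) (auto simp: sum.atLeast1_atMost_eq lessThan_Suc)
    then show ?thesis by (simp add: sum_distrib_left)
  qed
  finally have E: "(\<Sum>j=1..k. ee n (2*pi*real j / real k)) = \<omega> * (\<Sum>i<k. \<omega> ^ i)" .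
  show ?thesis
  proof (cases "int k dvd n")
    case True
    then obtain m where m: "n = int k * m" by blast
    have "\<omega> = ee m (2*pi)" unfolding \<omega>_def ee_def using k by (simp add: m field_simps)
    then have "\<omega> = 1" using ee_2pi[of m 0] by simp
    then show ?thesis using E True by (simp add: sum_gp_strict)
  next
    case False
    have "\<omega> \<noteq> 1"
    proof
      assume "\<omega> = 1"
      then obtain m :: int where "of_int n * (2*pi / real k) = of_int (2 * m) * pi"
        unfolding \<omega>_def ee_def exp_eq_1 by auto
      then have "of_int n = real k * of_int m" using k by (simp add: field_simps)
      then have "n = int k * m" by (metis of_int_eq_iff of_int_mult of_int_of_nat_eq)
      then show False using False by simp
    qed
    then show ?thesis using E False wk by (simp add: sum_gp_strict)
  qed
qed



lemma D_periodic:
  assumes D0: "D 0 = h" and dD: "\<And>m x. (D m has_real_derivative D (Suc m) x) (at x)"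
    and p: "\<And>s. h (s + 2 * pi) = h s"
  shows "D m (t + 2*pi) = D m t"
proof (induction m arbitrary: t)
  case 0 then show ?case using D0 p by simp
next
  case (Suc m)
  have "((\<lambda>x. D m (x + 2*pi)) has_real_derivative D (Suc m) (t + 2*pi)) (at t)"
    using DERIV_shift[THEN iffD1, OF dD[of m "t + 2*pi"]] .
  moreover have "(\<lambda>x. D m (x + 2*pi)) = D m" using Suc.IH by (rule ext)
  ultimately have "(D m has_real_derivative D (Suc m) (t + 2*pi)) (at t)" by simp
  then show ?case using dD[of m t] DERIV_unique by blast
qed

definition W :: "(real \<Rightarrow> real) \<Rightarrow> real \<Rightarrow> complex" where
  "W g u = complex_of_real (g u) * ee 1 u"

definition Z :: "nat \<Rightarrow> (real \<Rightarrow> real) \<Rightarrow> real \<Rightarrow> complex" where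
  "Z k g s = complex_of_real (2 / real k) * (\<Sum>j=1..k. W g (s + 2*pi*real j / real k))"

lemma W_shift_deriv:
  assumes d: "\<And>x. (g has_real_derivative g' x) (at x)"
  shows "((\<lambda>s. W g (s + c)) has_vector_derivative (W g' (s + c) + \<i> * W g (s + c))) (at s)"
proof -
  have a: "((\<lambda>s. complex_of_real (g (s + c))) has_vector_derivative complex_of_real (g' (s + c))) (at s)"
    by (rule has_vector_derivative_of_real[OF DERIV_shift[THEN iffD1, OF d[of "s + c"]]])
  have e: "(\<lambda>s. ee 1 (s + c)) = (\<lambda>s. ee 1 c * ee 1 s)" by (rule ext) (simp add: ee_shift mult.commute)
  have b: "((\<lambda>s. ee 1 (s + c)) has_vector_derivative (\<i> * ee 1 (s + c))) (at s)"
    unfolding e using has_vector_derivative_mult_right[OF ee_deriv[of 1 s UNIV], of "ee 1 c"]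
    by (simp add: ee_shift mult.commute mult.left_commute)
  show ?thesis
    using has_vector_derivative_mult[OF a b] unfolding W_def by (simp add: algebra_simps)
qed

lemma Z_eq: "Z k g = (\<lambda>s. complex_of_real (2 / real k) * (\<Sum>j=1..k. W g (s + 2*pi*real j / real k)))"
  by (rule ext) (simp add: Z_def)

lemma Z_deriv:
  assumes d: "\<And>x. (g has_real_derivative g' x) (at x)"
  shows "(Z k g has_vector_derivative (Z k g' s + \<i> * Z k g s)) (at s)"
proof -
  have "((\<lambda>s. complex_of_real (2 / real k) * (\<Sum>j=1..k. W g (s + 2*pi*real j / real k))) has_vector_derivative
      complex_of_real (2 / real k) * (\<Sum>j=1..k. W g' (s + 2*pi*real j / real k) + \<i> * W g (s + 2*pi*real j / real k))) (at s)"
    by (intro has_vector_derivative_mult_right has_vector_derivative_sum W_shift_deriv[OF d])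
  moreover have "complex_of_real (2 / real k) * (\<Sum>j=1..k. W g' (s + 2*pi*real j / real k) + \<i> * W g (s + 2*pi*real j / real k))
      = Z k g' s + \<i> * Z k g s"
    by (simp add: Z_def sum.distrib sum_distrib_left algebra_simps)
  ultimately show ?thesis unfolding Z_eq[of k g] by simp
qed

lemma W_per: "(\<And>s. g (s + 2*pi) = g s) \<Longrightarrow> W g (u + 2*pi) = W g u"
  by (simp add: W_def ee_2pi)

lemma Z_per:
  assumes p: "\<And>s. g (s + 2*pi) = g s"
  shows "Z k g (s + 2*pi) = Z k g s"
proof -
  have "W g (s + 2*pi + x) = W g (s + x)" for x
    using W_per[of g "s + x", OF p] by (simp add: algebra_simps)
  then show ?thesis by (simp add: Z_def)
qed

lemma Z_per_k:
  assumes p: "\<And>s. g (s + 2*pi) = g s" and k: "k > 0"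
  shows "Z k g (s + 2*pi / real k) = Z k g s"
proof -
  define f where "f j = W g (s + 2*pi*real j / real k)" for j
  have shift: "W g (s + 2*pi / real k + 2*pi*real j / real k) = f (Suc j)" for j
    unfolding f_def using k by (simp add: field_simps)
  have fk: "f (Suc k) = f 1"
  proof -
    have eq: "s + 2*pi*real (Suc k) / real k = (s + 2*pi*real 1 / real k) + 2*pi"
      using k by (simp add: field_simps)
    show ?thesis unfolding f_def by (subst eq) (rule W_per[where g=g, OF p])
  qed
  have "(\<Sum>j=1..k. W g (s + 2*pi / real k + 2*pi*real j / real k)) = (\<Sum>j=1..k. f (Suc j))"
    by (simp add: shift)
  also have "\<dots> = (\<Sum>j=Suc 1..Suc k. f j)" by (rule sum.shift_bounds_cl_Suc_ivl[symmetric])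
  also have "\<dots> = (\<Sum>j=Suc 1..k. f j) + f (Suc k)" using k by simp
  also have "\<dots> = f 1 + (\<Sum>j=Suc 1..k. f j)" using fk by simp
  also have "\<dots> = (\<Sum>j=1..k. f j)" using k by (simp add: sum.atLeast_Suc_atMost)
  finally show ?thesis unfolding Z_def f_def by simp
qed

lemma cf_W: "cf (W g) n = cf (\<lambda>u. complex_of_real (g u)) (n - 1)"
proof -
  have "W g u * ee (-n) u = complex_of_real (g u) * ee (- (n - 1)) u" for u
    unfolding W_def by (simp add: mult.assoc ee_add)
  then show ?thesis unfolding cf_def by simp
qed

lemma cf_sum_scale:
  assumes f: "\<And>j. j \<in> J \<Longrightarrow> continuous_on {0..2*pi} (f j)" and J: "finite J"
  shows "cf (\<lambda>s. a * (\<Sum>j\<in>J. f j s)) n = a * (\<Sum>j\<in>J. cf (f j) n)"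
proof -
  have "integral {0..2*pi} (\<lambda>s. a * (\<Sum>j\<in>J. f j s) * ee (-n) s) = integral {0..2*pi} (\<lambda>s. a * (\<Sum>j\<in>J. f j s * ee (-n) s))"
    by (simp add: sum_distrib_right mult.assoc)
  also have "\<dots> = a * integral {0..2*pi} (\<lambda>s. \<Sum>j\<in>J. f j s * ee (-n) s)"
    by (rule integral_mult_right)
  also have "integral {0..2*pi} (\<lambda>s. \<Sum>j\<in>J. f j s * ee (-n) s) = (\<Sum>j\<in>J. integral {0..2*pi} (\<lambda>s. f j s * ee (-n) s))"
    by (rule integral_sum[OF J]) (intro integrable_continuous_interval continuous_intros f; assumption)
  finally show ?thesis unfolding cf_def by (simp add: sum_divide_distrib sum_distrib_left)
qed

lemma cf_Z:
  assumes c: "continuous_on UNIV g" and p: "\<And>s. g (s + 2*pi) = g s" and k: "k > 0"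
  shows "cf (Z k g) n = (if int k dvd n then 2 else 0) * cf (\<lambda>u. complex_of_real (g u)) (n - 1)"
proof -
  have cW: "continuous_on UNIV (W g)" unfolding W_def[abs_def]
    by (intro continuous_intros continuous_on_of_real c)
  have cWs: "continuous_on {0..2*pi} (\<lambda>s. W g (s + c))" for c
    by (rule continuous_on_compose2[OF cW]) (auto intro!: continuous_intros)
  have "cf (Z k g) n = complex_of_real (2 / real k) * (\<Sum>j=1..k. cf (\<lambda>s. W g (s + 2*pi*real j / real k)) n)"
    unfolding Z_eq by (rule cf_sum_scale) (auto intro: cWs)
  also have "\<dots> = complex_of_real (2 / real k) * (\<Sum>j=1..k. ee n (2*pi*real j / real k) * cf (W g) n)"
    using cf_shift[OF cW W_per[where g=g, OF p]] by simp
  also have "\<dots> = complex_of_real (2 / real k) * (\<Sum>j=1..k. ee n (2*pi*real j / real k)) * cf (W g) n"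
    by (simp add: sum_distrib_right mult.assoc)
  also have "\<dots> = (if int k dvd n then 2 else 0) * cf (W g) n"
    by (subst roots_sum[OF k]) (use k in simp)
  finally show ?thesis by (simp add: cf_W)
qed



lemma fourier_rel:
  assumes c: "continuous_on UNIV h" and M: "M \<ge> 1"
  shows "4 * (norm (cf (\<lambda>u. complex_of_real (h u)) (int M)))^2 = (fourier_a h M)^2 + (fourier_b h M)^2"
proof -
  define f where "f u = complex_of_real (h u) * ee (- int M) u" for u
  have cf: "continuous_on {0..2*pi} f" unfolding f_def[abs_def]
    by (intro continuous_intros continuous_on_of_real continuous_on_subset[OF c]) auto
  have hi: "(f has_integral integral {0..2*pi} f) {0..2*pi}"
    by (rule integrable_integral[OF integrable_continuous_interval[OF cf]])
  have ReF: "(\<lambda>u. Re (f u)) = (\<lambda>u. h u * cos (real M * u))"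
    by (rule ext) (simp add: f_def ee_cis)
  have ImF: "(\<lambda>u. Im (f u)) = (\<lambda>u. - (h u * sin (real M * u)))"
    by (rule ext) (simp add: f_def ee_cis)
  have R: "Re (integral {0..2*pi} f) = integral {0..2*pi} (\<lambda>u. h u * cos (real M * u))"
    using has_integral_Re[OF hi] unfolding ReF by (simp add: integral_unique)
  have I: "Im (integral {0..2*pi} f) = - integral {0..2*pi} (\<lambda>u. h u * sin (real M * u))"
    using has_integral_Im[OF hi] unfolding ImF by (metis integral_neg integral_unique neg_equal_iff_equal has_integral_neg_iff)
  have cfe: "cf (\<lambda>u. complex_of_real (h u)) (int M) = integral {0..2*pi} f / (2*pi)"
    unfolding cf_def f_def by simp
  have "(norm (integral {0..2*pi} f / (2*pi)))^2 = ((Re (integral {0..2*pi} f))^2 + (Im (integral {0..2*pi} f))^2) / (4*pi^2)"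
    by (simp add: norm_divide cmod_power2 power_divide)
  then show ?thesis using M
    unfolding cfe R I fourier_a_def fourier_b_def by (simp add: power2_eq_square field_simps)
qed

lemma cf_neg_real: "cf (\<lambda>u. complex_of_real (h u)) (- n) = cnj (cf (\<lambda>u. complex_of_real (h u)) n)"
  unfolding cf_def by (simp add: integral_cnj ee_cnj)

lemma integral_periodic_multiple:
  fixes Q :: "real \<Rightarrow> real"
  assumes T: "T > 0" and p: "\<And>t. Q (t + T) = Q t" and c: "continuous_on UNIV Q"
  shows "integral {0..real m * T} Q = real m * integral {0..T} Q"
proof (induction m)
  case 0 then show ?case by simp
next
  case (Suc m)
  have ci: "Q integrable_on {a..b}" for a b
    by (intro integrable_continuous_interval continuous_on_subset[OF c]) auto
  have "integral {0..real (Suc m) * T} Q = integral {0..real m * T} Q + integral {real m * T..real m * T + T} Q"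
    using Henstock_Kurzweil_Integration.integral_combine[where a=0 and c="real m * T" and b="real m * T + T" and f=Q] T ci
    by (simp add: algebra_simps)
  also have "integral {real m * T..real m * T + T} Q = integral {0..T} (\<lambda>x. Q (x + real m * T))"
    using integral_shift_real_ivl[where c="real m * T" and a="real m * T" and b="real m * T + T" and f=Q] by simp
  also have "\<dots> = integral {0..T} Q"
    using periodic_nat[of Q T, OF p] by simp
  finally show ?case using Suc.IH by (simp add: algebra_simps)
qed



theorem lemma4p8:
  fixes h :: "real \<Rightarrow> real" and k :: nat
  assumes "k > 2"
    and "smooth_fun h"
    and "periodic_2pi h"
  shows "(\<lambda>m. let n = real (Suc m) in
            n * ((fourier_a h (k * Suc m - 1))\<^sup>2 + (fourier_b h (k * Suc m - 1))\<^sup>2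
               - (fourier_a h (k * Suc m + 1))\<^sup>2 - (fourier_b h (k * Suc m + 1))\<^sup>2))
         sums (midpoint_set_area h k / pi)"
proof -
  obtain D where D0: "D 0 = h" and dD: "\<And>m x. (D m has_real_derivative D (Suc m) x) (at x)"
    using assms(2) unfolding smooth_fun_def by blast
  have p: "\<And>s. h (s + 2*pi) = h s" using assms(3) unfolding periodic_2pi_def by blast
  have k0: "k > 0" using assms(1) by simp
  have pD: "D m (t + 2*pi) = D m t" for m t
    by (rule D_periodic[where D=D and h=h, OF D0 dD p])
  have cD: "continuous_on UNIV (D m)" for m
    using dD by (meson DERIV_isCont continuous_at_imp_continuous_on)
  have ch: "continuous_on UNIV h" using cD[of 0] D0 by simp
  define z where "z = Z k h"
  define z1 where "z1 = (\<lambda>s. Z k (D 1) s + \<i> * Z k h s)"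
  define z2 where "z2 = (\<lambda>s. (Z k (D 2) s + \<i> * Z k (D 1) s) + \<i> * z1 s)"
  have dZ: "(Z k (D m) has_vector_derivative (Z k (D (Suc m)) s + \<i> * Z k (D m) s)) (at s)" for m s
    by (rule Z_deriv[OF dD])
  have dz: "(z has_vector_derivative z1 s) (at s)" for s
    using dZ[of 0 s] D0 unfolding z_def z1_def by simp
  have dz1: "(z1 has_vector_derivative z2 s) (at s)" for s
  proof -
    have "((\<lambda>s. Z k (D 1) s + \<i> * Z k (D 0) s) has_vector_derivative
           (Z k (D 2) s + \<i> * Z k (D 1) s) + \<i> * (Z k (D 1) s + \<i> * Z k (D 0) s)) (at s)"
      using has_vector_derivative_add[OF dZ[of 1 s] has_vector_derivative_mult_right[OF dZ[of 0 s], of \<i>]]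
      by (simp add: numeral_2_eq_2)
    then show ?thesis unfolding z1_def z2_def using D0 by simp
  qed
  have cZ: "continuous_on UNIV (Z k (D m))" for m by (rule cont_of_deriv[OF dZ])
  have cz: "continuous_on UNIV z" using cZ[of 0] D0 unfolding z_def by simp
  have cz1: "continuous_on UNIV z1" unfolding z1_def using cZ[of 0] cZ[of 1] D0
    by (auto intro!: continuous_intros)
  have cz2: "continuous_on UNIV z2" unfolding z2_def using cZ[of 2] cZ[of 1] cz1
    by (auto intro!: continuous_intros)
  have pz: "z (t + 2*pi) = z t" for t unfolding z_def by (rule Z_per[where g=h, OF p])
  have pz1: "z1 (t + 2*pi) = z1 t" for t unfolding z1_def using Z_per[where g="D 1", OF pD] Z_per[where g=h, OF p] by simp
  have summ: "(\<lambda>n. norm (cf z n)) summable_on UNIV"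
    by (rule cf_decay[OF dz dz1 cz2 pz pz1])
  have cfz1: "cf z1 n = \<i> * of_int n * cf z n" for n
    by (rule cf_deriv[OF dz continuous_on_subset[OF cz1]]) (use pz[of 0] in auto)
  have PS: "((\<lambda>n. cnj (cf z n) * cf z1 n) has_sum (integral {0..2*pi} (\<lambda>t. cnj (z t) * z1 t) / (2*pi))) UNIV"
    by (rule parseval[OF cz pz summ continuous_on_subset[OF cz1]]) auto
  define r where "r n = real_of_int n * (norm (cf z n))^2" for n
  define Iw where "Iw s = Im (cnj (z s) * z1 s)" for s
  have cIw: "continuous_on UNIV Iw" unfolding Iw_def[abs_def] by (intro continuous_intros cz cz1)
  have hIm: "Im (integral {0..2*pi} (\<lambda>t. cnj (z t) * z1 t) / (2*pi)) = integral {0..2*pi} Iw / (2*pi)"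
  proof -
    have "((\<lambda>t. cnj (z t) * z1 t) has_integral integral {0..2*pi} (\<lambda>t. cnj (z t) * z1 t)) {0..2*pi}"
      by (intro integrable_integral integrable_continuous_interval continuous_intros continuous_on_subset[OF cz] continuous_on_subset[OF cz1]) auto
    from has_integral_Im[OF this] have "Im (integral {0..2*pi} (\<lambda>t. cnj (z t) * z1 t)) = integral {0..2*pi} Iw"
      unfolding Iw_def by (simp add: integral_unique)
    then show ?thesis by simp
  qed
  define R where "R = integral {0..2*pi} Iw / (2*pi)"
  have rsum: "(r has_sum R) UNIV"
  proof -
    have "((\<lambda>n. Im (cnj (cf z n) * cf z1 n)) has_sum R) UNIV" using has_sum_Im[OF PS] hIm R_def by simp
    moreover have "Im (cnj (cf z n) * cf z1 n) = r n" for n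
    proof -
      have "cnj (cf z n) * cf z1 n = \<i> * of_int n * (cf z n * cnj (cf z n))"
        by (simp add: cfz1 algebra_simps)
      also have "\<dots> = \<i> * of_int n * complex_of_real ((norm (cf z n))^2)"
        using complex_norm_square[of "cf z n"] by (simp del: of_real_power)
      finally show ?thesis unfolding r_def by simp
    qed
    ultimately show ?thesis by simp
  qed
  have ox: "omega_x h k = (\<lambda>s. Re (z s))"
    by (rule ext) (simp add: omega_x_def z_def Z_def W_def ee_cis Re_sum)
  have oy: "omega_y h k = (\<lambda>s. Im (z s))"
    by (rule ext) (simp add: omega_y_def z_def Z_def W_def ee_cis Im_sum)
  have dox: "deriv (omega_x h k) s = Re (z1 s)" for s
  proof -
    have "((\<lambda>s. Re (z s)) has_vector_derivative Re (z1 s)) (at s)"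
      by (rule bounded_linear.has_vector_derivative[OF bounded_linear_Re dz])
    then show ?thesis unfolding ox by (intro DERIV_imp_deriv) (simp add: has_real_derivative_iff_has_vector_derivative)
  qed
  have doy: "deriv (omega_y h k) s = Im (z1 s)" for s
  proof -
    have "((\<lambda>s. Im (z s)) has_vector_derivative Im (z1 s)) (at s)"
      by (rule bounded_linear.has_vector_derivative[OF bounded_linear_Im dz])
    then show ?thesis unfolding oy by (intro DERIV_imp_deriv) (simp add: has_real_derivative_iff_has_vector_derivative)
  qed
  have area: "midpoint_set_area h k = (1/2) * integral {0..2*pi / real k} Iw"
  proof -
    have "(\<lambda>s. omega_x h k s * deriv (omega_y h k) s - omega_y h k s * deriv (omega_x h k) s) = Iw"
      by (rule ext) (simp only: dox doy, simp add: ox oy Iw_def algebra_simps)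
    then show ?thesis unfolding midpoint_set_area_def by simp
  qed
  have pIw: "Iw (t + 2*pi / real k) = Iw t" for t
  proof -
    have "z (t + 2*pi / real k) = z t" unfolding z_def by (rule Z_per_k[where g=h, OF p k0])
    moreover have "z1 (t + 2*pi / real k) = z1 t"
      unfolding z1_def using Z_per_k[where g="D 1", OF pD k0] Z_per_k[where g=h, OF p k0] by simp
    ultimately show ?thesis unfolding Iw_def by simp
  qed
  have "integral {0..real k * (2*pi / real k)} Iw = real k * integral {0..2*pi / real k} Iw"
    by (rule integral_periodic_multiple[OF _ pIw cIw]) (use k0 in simp)
  then have full: "integral {0..2*pi} Iw = real k * integral {0..2*pi / real k} Iw"
    using k0 by simp
  have AR: "midpoint_set_area h k / pi = R / real k"
    unfolding area R_def using full k0 by (simp add: field_simps)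
  have r0: "r 0 = 0" by (simp add: r_def)
  have s1: "(\<lambda>m. r (int (Suc m)) + r (- int (Suc m))) sums R"
    using int_has_sum_imp_sums[OF rsum] r0 by simp
  define f where "f m = (1 / real k) * (r (int (Suc m)) + r (- int (Suc m)))" for m
  have s2: "f sums (midpoint_set_area h k / pi)"
    unfolding f_def AR using sums_mult[OF s1, of "1 / real k"] by simp
  define g where "g m = k * m + (k - 1)" for m
  have gmono: "strict_mono g"
  proof (intro strict_monoI)
    fix x y :: nat assume "x < y"
    then have "k * x < k * y" using k0 by simp
    then show "g x < g y" unfolding g_def by (rule add_less_mono1)
  qed
  have cfz: "cf z n = (if int k dvd n then 2 else 0) * cf (\<lambda>u. complex_of_real (h u)) (n - 1)" for n
    unfolding z_def by (rule cf_Z[where g=h, OF ch p k0])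
  have fz: "f p = 0" if "p \<notin> range g" for p
  proof -
    have nd: "\<not> int k dvd int (Suc p)"
    proof
      assume "int k dvd int (Suc p)"
      then have "k dvd Suc p" by (simp only: of_nat_dvd_iff)
      then obtain q where q: "Suc p = k * q" by blast
      with k0 have "q \<ge> 1" by (cases q) auto
      then have "p = g (q - 1)" unfolding g_def using q k0
        by (cases q) (auto simp: algebra_simps)
      then show False using that by auto
    qed
    then have "\<not> int k dvd - int (Suc p)" by (metis dvd_minus_iff)
    with nd show ?thesis unfolding f_def r_def by (simp add: cfz)
  qed
  have s3: "(\<lambda>m. f (g m)) sums (midpoint_set_area h k / pi)"
    using sums_mono_reindex[of g f "midpoint_set_area h k / pi"] gmono fz s2 by blast
  have fg: "f (g m) = (let n = real (Suc m) in
            n * ((fourier_a h (k * Suc m - 1))\<^sup>2 + (fourier_b h (k * Suc m - 1))\<^sup>2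
               - (fourier_a h (k * Suc m + 1))\<^sup>2 - (fourier_b h (k * Suc m + 1))\<^sup>2))" for m
  proof -
    define N where "N = k * Suc m"
    have N3: "N \<ge> 3" unfolding N_def using assms(1) by (simp add: less_eq_Suc_le mult_le_mono)
    have sg: "Suc (g m) = N" unfolding g_def N_def using k0 by (simp add: algebra_simps)
    define hc where "hc = (\<lambda>u. complex_of_real (h u))"
    have c1: "cf z (int N) = 2 * cf hc (int (N - 1))"
      using cfz[of "int N"] N3 unfolding N_def hc_def by (simp add: of_nat_diff)
    have c2: "cf z (- int N) = 2 * cnj (cf hc (int (N + 1)))"
    proof -
      have dN: "int k dvd - int N" unfolding N_def by simp
      have "cf z (- int N) = 2 * cf hc (- int N - 1)"
        using cfz[of "- int N"] dN unfolding hc_def by simp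
      also have "- int N - 1 = - int (N + 1)" by simp
      finally have "cf z (- int N) = 2 * cf hc (- int (N + 1))" .
      then show ?thesis unfolding hc_def cf_neg_real .
    qed
    have a1: "4 * (norm (cf hc (int (N - 1))))^2 = (fourier_a h (N - 1))^2 + (fourier_b h (N - 1))^2"
      unfolding hc_def by (rule fourier_rel[OF ch]) (use N3 in simp)
    have a2: "4 * (norm (cf hc (int (N + 1))))^2 = (fourier_a h (N + 1))^2 + (fourier_b h (N + 1))^2"
      unfolding hc_def by (rule fourier_rel[OF ch]) simp
    have "f (g m) = (1 / real k) * (real N * (norm (cf z (int N)))^2 - real N * (norm (cf z (- int N)))^2)"
      unfolding f_def r_def sg by simp
    also have "\<dots> = (1 / real k) * real N * (4 * (norm (cf hc (int (N - 1))))^2 - 4 * (norm (cf hc (int (N + 1))))^2)"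
      unfolding c1 c2 by (simp add: norm_mult power_mult_distrib algebra_simps)
    also have "\<dots> = (1 / real k) * real N * (((fourier_a h (N - 1))^2 + (fourier_b h (N - 1))^2) - ((fourier_a h (N + 1))^2 + (fourier_b h (N + 1))^2))"
      by (simp only: a1 a2)
    also have "\<dots> = real (Suc m) * ((fourier_a h (N - 1))^2 + (fourier_b h (N - 1))^2 - (fourier_a h (N + 1))^2 - (fourier_b h (N + 1))^2)"
    proof -
      have "(1 / real k) * real N = real (Suc m)" unfolding N_def using k0 by (simp add: field_simps)
      then show ?thesis by (simp add: algebra_simps)
    qed
    finally show ?thesis unfolding N_def Let_def by simp
  qed
  show ?thesis using s3 unfolding fg .
qed


end
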